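(* Consider logistic regression Bayesian networks on $m$ binary nodes as described in the context, for an ensemble $\mathcal{G}$ of DAGs on $[m]$ and parameter maps $\mathcal{P}(\mathcal{G})$. Then $$\Delta_{\max}:=\max_{i\in[m]}\max_{G\in\mathcal{G}}\sup_{\Theta\in\mathcal{P}(\mathcal{G})}\mathbb{E}_{X_{\pi_i(G)}}[\Delta(\eta_i,\eta_0)]\le \frac{w^1_{\max}}{2},\qquad \sup_{\Theta\in\mathcal{P}(\mathcal{G})}I(S;G\mid\Theta)\le\frac{n\,m\,w^1_{\max}}{2}.$$
   Context: Each $X_i\in\{0,1\}$. Given DAG $G$ and parameter map $\Theta$, node $i$ has a weight vector $w_i=\Theta_i(G)\in\mathbb{R}^{|\pi_i(G)|}$, and $X_i\mid X_{\pi_i(G)}\sim\mathrm{Bernoulli}(\sigma(\langle X_{\pi_i(G)},w_i\rangle))$ with $\sigma(t)=(1+e^{-t})^{-1}$; the reference (no-parent) distribution is $P_i(\varnothing,\Theta)=\mathrm{Bernoulli}(1/2)$. $w^1_{\max}:=\sup_{\Theta\in\mathcal{P}(\mathcal{G})}\max_{G\in\mathcal{G}}\max_{i}\|\Theta_i(G)\|_1$. The joint distribution is $\prod_iP_i(x_i\mid x_{\pi_i(G)})$; $S$ is $n$ i.i.d. samples from it; $I(S;G\mid\Theta)$ is the mutual information between $S$ and $G$ with $G$ uniform on $\mathcal{G}$ and $\Theta$ fixed. In the Bernoulli exponential family (sufficient statistic $x$), $\eta_i=\langle w_i,X_{\pi_i(G)}\rangle$ with expected sufficient statistic $\sigma(\eta_i)$,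 and $\eta_0=0$ with expected sufficient statistic $1/2$; $\Delta(\eta_1,\eta_2)=(\eta_1-\eta_2)(\tau(\eta_1)-\tau(\eta_2))$. $\mathbb{E}_{X_{\pi_i(G)}}$ is expectation over parents' values under the network's distribution. *)

theory Defs
  imports Complex_Main "HOL-Library.Extended_Real" "HOL-Library.FuncSet"
begin

text \<open>Nodes are 0..m-1. A DAG is given by its parent-set map G :: nat => nat set
  (G i = parents of node i). A parameter map Theta assigns to each DAG G, node i and
  parent j the weight Theta G i j (the j-th entry of w_i = Theta_i(G)).\<close>

type_synonym dag = "nat \<Rightarrow> nat set"
type_synonym param_map = "dag \<Rightarrow> nat \<Rightarrow> nat \<Rightarrow> real"

definition sigmoid :: "real \<Rightarrow> real" where
  "sigmoid t = 1 / (1 + exp (- t))"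

definition is_dag :: "nat \<Rightarrow> dag \<Rightarrow> bool" where
  "is_dag m G \<longleftrightarrow> (\<forall>i. G i \<subseteq> {..<m} \<and> (m \<le> i \<longrightarrow> G i = {}))
                    \<and> acyclic {(j, i). j \<in> G i}"

definition configs :: "nat \<Rightarrow> (nat \<Rightarrow> bool) set" where
  "configs m = PiE {..<m} (\<lambda>_. UNIV)"

definition eta :: "dag \<Rightarrow> param_map \<Rightarrow> nat \<Rightarrow> (nat \<Rightarrow> bool) \<Rightarrow> real" where
  "eta G Theta i x = (\<Sum>j\<in>G i. Theta G i j * of_bool (x j))"

definition node_pmf :: "dag \<Rightarrow> param_map \<Rightarrow> nat \<Rightarrow> (nat \<Rightarrow> bool) \<Rightarrow> real" where
  "node_pmf G Theta i x =
     (if x i then sigmoid (eta G Theta i x) else 1 - sigmoid (eta G Theta i x))"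

definition joint_pmf :: "nat \<Rightarrow> dag \<Rightarrow> param_map \<Rightarrow> (nat \<Rightarrow> bool) \<Rightarrow> real" where
  "joint_pmf m G Theta x = (\<Prod>i<m. node_pmf G Theta i x)"

text \<open>Bernoulli exponential family: tau = expected sufficient statistic = sigmoid
  (note sigmoid 0 = 1/2, the reference distribution).\<close>
definition bern_Delta :: "real \<Rightarrow> real \<Rightarrow> real" where
  "bern_Delta e1 e2 = (e1 - e2) * (sigmoid e1 - sigmoid e2)"

text \<open>E_{X_{pi_i(G)}}[Delta(eta_i, eta_0)] with eta_0 = 0\<close>
definition exp_Delta :: "nat \<Rightarrow> dag \<Rightarrow> param_map \<Rightarrow> nat \<Rightarrow> real" where
  "exp_Delta m G Theta i =
     (\<Sum>x\<in>configs m. joint_pmf m G Theta x * bern_Delta (eta G Theta i x) 0)"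

definition Delta_max :: "nat \<Rightarrow> dag set \<Rightarrow> param_map set \<Rightarrow> ereal" where
  "Delta_max m Gs Ps =
     (SUP i\<in>{..<m}. SUP G\<in>Gs. SUP Theta\<in>Ps. ereal (exp_Delta m G Theta i))"

definition w1_max :: "nat \<Rightarrow> dag set \<Rightarrow> param_map set \<Rightarrow> ereal" where
  "w1_max m Gs Ps =
     (SUP Theta\<in>Ps. SUP G\<in>Gs. SUP i\<in>{..<m}. ereal (\<Sum>j\<in>G i. \<bar>Theta G i j\<bar>))"

definition samples :: "nat \<Rightarrow> nat \<Rightarrow> (nat \<Rightarrow> nat \<Rightarrow> bool) set" where
  "samples m n = PiE {..<n} (\<lambda>_. configs m)"

definition sample_pmf :: "nat \<Rightarrow> nat \<Rightarrow> dag \<Rightarrow> param_map \<Rightarrow> (nat \<Rightarrow> nat \<Rightarrow> bool) \<Rightarrow> real" where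
  "sample_pmf m n G Theta S = (\<Prod>k<n. joint_pmf m G Theta (S k))"

text \<open>Mutual information (in nats) between a discrete observation s ranging over the
  finite set Omega and a parameter g uniform on the finite set A, with
  P g s = P(s | g). Convention 0 log 0 = 0.\<close>
definition mutual_info_unif :: "'g set \<Rightarrow> 's set \<Rightarrow> ('g \<Rightarrow> 's \<Rightarrow> real) \<Rightarrow> real" where
  "mutual_info_unif A Omega P =
     (\<Sum>g\<in>A. \<Sum>s\<in>Omega.
        if P g s = 0 then 0
        else (1 / real (card A)) * P g s *
             ln (P g s / ((\<Sum>g'\<in>A. P g' s) / real (card A))))"

definition MI_SG :: "nat \<Rightarrow> nat \<Rightarrow> dag set \<Rightarrow> param_map \<Rightarrow> real" where
  "MI_SG m n Gs Theta = mutual_info_unif Gs (samples m n) (\<lambda>G S. sample_pmf m n G Theta S)"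

end

theory Submission imports Defs begin

lemma sig_pos: "0 < sigmoid t" by (simp add: sigmoid_def add_pos_pos)
lemma sig_lt1: "sigmoid t < 1"
proof -
  have "1 < 1 + exp (-t)" "0 < 1 + exp (-t)" by (simp_all add: add_pos_pos)
  thus ?thesis unfolding sigmoid_def by (simp add: divide_less_eq)
qed
lemma sig_neg: "sigmoid (-t) = 1 - sigmoid t"
proof -
  have "1 + exp t > 0" by (simp add: add_pos_pos)
  show ?thesis using \<open>1 + exp t > 0\<close> by (simp add: sigmoid_def exp_minus field_simps)
qed

lemma node_pos: "0 < node_pmf G Th i x"
  using sig_pos sig_lt1 by (simp add: node_pmf_def)

lemma eta_upd: "v \<notin> G i \<Longrightarrow> eta G Th i (x(v:=b)) = eta G Th i x"
  unfolding eta_def by (intro sum.cong) auto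

lemma node_upd: "i \<noteq> v \<Longrightarrow> v \<notin> G i \<Longrightarrow> node_pmf G Th i (x(v:=b)) = node_pmf G Th i x"
  by (simp add: node_pmf_def eta_upd)

lemma norm_gen:
  assumes "finite V" "\<forall>i\<in>V. G i \<subseteq> V" "acyclic {(j,i). j \<in> G i}"
  shows "(\<Sum>x\<in>PiE V (\<lambda>_. UNIV). \<Prod>i\<in>V. node_pmf G Th i x) = 1"
  using assms
proof (induction "card V" arbitrary: V rule: less_induct)
  case less
  show ?case
  proof (cases "V = {}")
    case True then show ?thesis by simp
  next
    case False
    define R where "R = {(j,i). j \<in> G i \<and> i \<in> V}"
    have "R \<subseteq> V \<times> V" using less.prems(2) by (auto simp: R_def)
    hence fR: "finite R" using less.prems(1) by (meson finite_SigmaI finite_subset)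
    have aR: "acyclic R" by (rule acyclic_subset[OF less.prems(3)]) (auto simp: R_def)
    have "wf (R\<inverse>)" using fR aR by (simp add: finite_acyclic_wf_converse)
    then obtain v where v: "v \<in> V" "\<And>y. (y, v) \<in> R\<inverse> \<Longrightarrow> y \<notin> V"
      using False wfE_min' by blast
    have sink: "\<forall>i\<in>V. v \<notin> G i" using v(2) by (auto simp: R_def)
    define V' where "V' = V - {v}"
    have VV: "V = insert v V'" "v \<notin> V'" using v by (auto simp: V'_def)
    have IH: "(\<Sum>x\<in>PiE V' (\<lambda>_. UNIV). \<Prod>i\<in>V'. node_pmf G Th i x) = 1"
      apply (rule less.hyps)
      using less.prems v sink by (auto simp: V'_def card_gt_0_iff intro!: diff_less)
    have fV': "finite V'" using less.prems(1) by (simp add: V'_def)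
    have "(\<Sum>x\<in>PiE V (\<lambda>_. UNIV). \<Prod>i\<in>V. node_pmf G Th i x)
       = (\<Sum>p\<in>(UNIV \<times> PiE V' (\<lambda>_. UNIV)). \<Prod>i\<in>insert v V'. node_pmf G Th i ((snd p)(v := fst p)))"
      unfolding VV(1) PiE_insert_eq
      by (subst sum.reindex[OF inj_combinator[OF VV(2)]]) (simp add: case_prod_beta)
    also have "\<dots> = (\<Sum>p\<in>(UNIV \<times> PiE V' (\<lambda>_. UNIV)). node_pmf G Th v ((snd p)(v:=fst p)) * (\<Prod>i\<in>V'. node_pmf G Th i (snd p)))"
      using VV fV' sink
      by (intro sum.cong refl) (auto intro!: prod.cong node_upd)
    also have "\<dots> = (\<Sum>b\<in>UNIV. \<Sum>g\<in>PiE V' (\<lambda>_. UNIV). node_pmf G Th v (g(v:=b)) * (\<Prod>i\<in>V'. node_pmf G Th i g))"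
      by (subst sum.cartesian_product) (simp add: case_prod_beta)
    also have "\<dots> = (\<Sum>g\<in>PiE V' (\<lambda>_. UNIV). (\<Sum>b\<in>UNIV. node_pmf G Th v (g(v:=b))) * (\<Prod>i\<in>V'. node_pmf G Th i g))"
      by (subst sum.swap) (simp add: sum_distrib_right)
    also have "\<dots> = (\<Sum>g\<in>PiE V' (\<lambda>_. UNIV). (\<Prod>i\<in>V'. node_pmf G Th i g))"
    proof (intro sum.cong refl)
      fix g
      have "v \<notin> G v" using sink v by auto
      hence "(\<Sum>b\<in>UNIV. node_pmf G Th v (g(v:=b))) = 1"
        by (simp add: UNIV_bool node_pmf_def eta_upd)
      thus "(\<Sum>b\<in>UNIV. node_pmf G Th v (g(v:=b))) * (\<Prod>i\<in>V'. node_pmf G Th i g) = (\<Prod>i\<in>V'. node_pmf G Th i g)" by simp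
    qed
    finally show ?thesis using IH by simp
  qed
qed

lemma joint_norm: "is_dag m G \<Longrightarrow> (\<Sum>x\<in>configs m. joint_pmf m G Th x) = 1"
  unfolding configs_def joint_pmf_def is_dag_def
  by (rule norm_gen) auto

lemma ln_ge: "0 < y \<Longrightarrow> 1 - 1/y \<le> ln (y::real)"
  using ln_le_minus_one[of "1/y"] by (simp add: ln_div)

lemma MI_gen:
  fixes P :: "'g \<Rightarrow> 's \<Rightarrow> real"
  assumes A: "finite A" "A \<noteq> {}" and O: "finite Om"
    and pos: "\<And>g s. g \<in> A \<Longrightarrow> s \<in> Om \<Longrightarrow> 0 < P g s"
    and norm: "\<And>g. g \<in> A \<Longrightarrow> (\<Sum>s\<in>Om. P g s) = 1"
    and q: "0 < q" "real (card Om) * q = 1"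
    and bd: "\<And>g s. g \<in> A \<Longrightarrow> s \<in> Om \<Longrightarrow> ln (P g s / q) \<le> C"
  shows "mutual_info_unif A Om P \<le> C"
proof -
  define k where "k = real (card A)"
  have k: "0 < k" using A by (simp add: k_def card_gt_0_iff)
  define Pb where "Pb s = (\<Sum>g\<in>A. P g s) / k" for s
  have Pbpos: "0 < Pb s" if "s \<in> Om" for s
    unfolding Pb_def using k A pos that by (intro divide_pos_pos sum_pos) auto
  have "mutual_info_unif A Om P = (\<Sum>g\<in>A. \<Sum>s\<in>Om. (1/k) * P g s * ln (P g s / q)
              - (1/k) * P g s * ln (Pb s / q))"
    unfolding mutual_info_unif_def k_def[symmetric] Pb_def[symmetric]
  proof (intro sum.cong refl)
    fix g s assume gs: "g \<in> A" "s \<in> Om"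
    have "P g s / Pb s = (P g s / q) / (Pb s / q)" using q by simp
    hence "ln (P g s / Pb s) = ln (P g s / q) - ln (Pb s / q)"
      using pos[OF gs] Pbpos[OF gs(2)] q by (simp add: ln_div)
    thus "(if P g s = 0 then 0 else 1 / k * P g s * ln (P g s / Pb s)) =
         1 / k * P g s * ln (P g s / q) - 1 / k * P g s * ln (Pb s / q)"
      using pos[OF gs] by (simp add: right_diff_distrib)
  qed
  also have "\<dots> = (\<Sum>g\<in>A. \<Sum>s\<in>Om. (1/k) * P g s * ln (P g s / q))
      - (\<Sum>s\<in>Om. Pb s * ln (Pb s / q))"
    by (simp add: sum_subtractf sum.swap[of _ A Om] Pb_def sum_distrib_right sum_divide_distrib)
  also have "\<dots> \<le> C - 0"
  proof (rule diff_mono)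
    have "(\<Sum>g\<in>A. \<Sum>s\<in>Om. (1/k) * P g s * ln (P g s / q)) \<le> (\<Sum>g\<in>A. \<Sum>s\<in>Om. (1/k) * P g s * C)"
      using pos bd k by (intro sum_mono mult_left_mono) (auto intro!: mult_nonneg_nonneg less_imp_le)
    also have "\<dots> = (\<Sum>g\<in>A. (1/k) * C)"
    proof (intro sum.cong refl)
      fix g assume "g \<in> A"
      have "(\<Sum>s\<in>Om. (1/k) * P g s * C) = (1/k) * C * (\<Sum>s\<in>Om. P g s)"
        by (simp add: sum_distrib_left mult_ac)
      thus "(\<Sum>s\<in>Om. (1/k) * P g s * C) = (1/k) * C" using norm[OF \<open>g \<in> A\<close>] by simp
    qed
    also have "\<dots> = C" using k by (simp add: k_def)
    finally show "(\<Sum>g\<in>A. \<Sum>s\<in>Om. (1/k) * P g s * ln (P g s / q)) \<le> C" .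
    have "(\<Sum>s\<in>Om. Pb s - q) \<le> (\<Sum>s\<in>Om. Pb s * ln (Pb s / q))"
    proof (intro sum_mono)
      fix s assume s: "s \<in> Om"
      have "Pb s * (1 - 1/(Pb s / q)) \<le> Pb s * ln (Pb s / q)"
        using Pbpos[OF s] q by (intro mult_left_mono ln_ge) auto
      moreover have "Pb s * (1 - 1/(Pb s / q)) = Pb s - q" using Pbpos[OF s] by (simp add: field_simps)
      ultimately show "Pb s - q \<le> Pb s * ln (Pb s / q)" by simp
    qed
    moreover have "(\<Sum>s\<in>Om. Pb s) = 1"
    proof -
      have "(\<Sum>s\<in>Om. Pb s) = (\<Sum>g\<in>A. \<Sum>s\<in>Om. P g s) / k"
        by (simp add: Pb_def sum_divide_distrib[symmetric] sum.swap[of _ A Om])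
      also have "\<dots> = 1" using norm k by (simp add: k_def)
      finally show ?thesis .
    qed
    ultimately show "0 \<le> (\<Sum>s\<in>Om. Pb s * ln (Pb s / q))"
      using q by (simp add: sum_subtractf)
  qed
  finally show ?thesis by simp
qed

lemma ln2sig: "ln (2 * sigmoid t) \<le> t / 2"
proof -
  define a where "a = exp (t/2)"
  have a: "0 < a" by (simp add: a_def)
  have e: "exp (-t) = 1 / (a*a)" unfolding a_def by (simp add: exp_minus mult_exp_exp inverse_eq_divide)
  have "0 \<le> (a - 1)^2" by simp
  hence "2 * a \<le> a*a + 1" by (simp add: power2_eq_square algebra_simps)
  hence "2 * sigmoid t \<le> a"
    unfolding sigmoid_def e using a mult_left_mono[OF \<open>2 * a \<le> a*a + 1\<close>, of a]
    by (simp add: field_simps)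
  hence "ln (2 * sigmoid t) \<le> ln a" using sig_pos by (intro ln_mono) auto
  thus ?thesis by (simp add: a_def)
qed

lemma eta_abs: "\<bar>eta G Th i x\<bar> \<le> (\<Sum>j\<in>G i. \<bar>Th G i j\<bar>)"
  unfolding eta_def
  by (rule order_trans[OF sum_abs]) (intro sum_mono, simp add: abs_mult)

lemma ln_node: "ln (2 * node_pmf G Th i x) \<le> (\<Sum>j\<in>G i. \<bar>Th G i j\<bar>) / 2"
proof -
  have "ln (2 * node_pmf G Th i x) \<le> \<bar>eta G Th i x\<bar> / 2"
  proof (cases "x i")
    case True
    thus ?thesis using ln2sig[of "eta G Th i x"] by (simp add: node_pmf_def)
  next
    case False
    thus ?thesis using ln2sig[of "- eta G Th i x"] by (simp add: node_pmf_def sig_neg)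
  qed
  thus ?thesis using eta_abs[of G Th i x] by simp
qed

lemma delta_bd: "bern_Delta e 0 \<le> (\<Sum>j\<in>G i. \<bar>Th G i j\<bar>) / 2" if "\<bar>e\<bar> \<le> (\<Sum>j\<in>G i. \<bar>Th G i j\<bar>)"
proof -
  have s0: "sigmoid 0 = 1/2" by (simp add: sigmoid_def)
  have "\<bar>sigmoid e - 1/2\<bar> \<le> 1/2" using sig_pos[of e] sig_lt1[of e] by linarith
  hence "e * (sigmoid e - 1/2) \<le> \<bar>e\<bar> * (1/2)"
    by (metis abs_ge_self abs_mult abs_ge_zero mult_left_mono order_trans)
  thus ?thesis using that by (simp add: bern_Delta_def s0)
qed


lemma fin_configs: "finite (configs m)"
  unfolding configs_def by (intro finite_PiE) auto

lemma card_configs: "card (configs m) = 2^m"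
  unfolding configs_def by (simp add: card_PiE)

lemma fin_samples: "finite (samples m n)"
  unfolding samples_def by (intro finite_PiE fin_configs) auto

lemma card_samples: "card (samples m n) = 2^(m*n)"
  unfolding samples_def by (simp add: card_PiE card_configs power_mult)

lemma joint_pos: "0 < joint_pmf m G Th x"
  unfolding joint_pmf_def by (intro prod_pos) (simp add: node_pos)

lemma sample_pos: "0 < sample_pmf m n G Th S"
  unfolding sample_pmf_def by (intro prod_pos) (simp add: joint_pos)

lemma sample_norm: "is_dag m G \<Longrightarrow> (\<Sum>S\<in>samples m n. sample_pmf m n G Th S) = 1"
  unfolding samples_def sample_pmf_def
  using prod_sum_PiE[of "{..<n}" "\<lambda>_. configs m" "\<lambda>_ x. joint_pmf m G Th x", symmetric]
  by (simp add: fin_configs joint_norm)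

lemma sample_ln:
  assumes c: "\<forall>i<m. (\<Sum>j\<in>G i. \<bar>Th G i j\<bar>) \<le> c"
  shows "ln (sample_pmf m n G Th S / (1 / 2^(m*n))) \<le> real n * real m * c / 2"
proof -
  have "sample_pmf m n G Th S / (1 / 2^(m*n)) = (\<Prod>k<n. \<Prod>i<m. 2 * node_pmf G Th i (S k))"
    by (simp add: sample_pmf_def joint_pmf_def prod.distrib power_mult)
  hence "ln (sample_pmf m n G Th S / (1 / 2^(m*n))) = (\<Sum>k<n. \<Sum>i<m. ln (2 * node_pmf G Th i (S k)))"
    by (simp add: ln_prod node_pos prod_pos less_imp_neq[symmetric])
  also have "\<dots> \<le> (\<Sum>k<n. \<Sum>i<m. c / 2)"
  proof (intro sum_mono)
    fix k i assume "i \<in> {..<m}"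
    hence "(\<Sum>j\<in>G i. \<bar>Th G i j\<bar>) / 2 \<le> c / 2" using c by simp
    thus "ln (2 * node_pmf G Th i (S k)) \<le> c / 2" using ln_node[of G Th i "S k"] by linarith
  qed
  also have "\<dots> = real n * real m * c / 2" by simp
  finally show ?thesis .
qed

theorem lemma10:
  fixes m n :: nat and Gs :: "dag set" and Ps :: "param_map set"
  assumes "finite Gs" and "Gs \<noteq> {}" and "\<forall>G\<in>Gs. is_dag m G"
  shows "Delta_max m Gs Ps \<le> w1_max m Gs Ps / 2
         \<and> (SUP Theta\<in>Ps. ereal (MI_SG m n Gs Theta))
           \<le> ereal (real n * real m) * w1_max m Gs Ps / 2"
proof
  have Wle: "ereal (\<Sum>j\<in>G i. \<bar>Th G i j\<bar>) \<le> w1_max m Gs Ps"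
    if "Th \<in> Ps" "G \<in> Gs" "i < m" for Th G i
    unfolding w1_max_def using that
    by (intro SUP_upper2[where i=Th]) (auto intro!: SUP_upper2[where i=G] SUP_upper2[where i=i])
  show "Delta_max m Gs Ps \<le> w1_max m Gs Ps / 2"
    unfolding Delta_max_def
  proof (intro SUP_least)
    fix i G Th assume i: "i \<in> {..<m}" and G: "G \<in> Gs" and Th: "Th \<in> Ps"
    have "exp_Delta m G Th i \<le> (\<Sum>x\<in>configs m. joint_pmf m G Th x * ((\<Sum>j\<in>G i. \<bar>Th G i j\<bar>) / 2))"
      unfolding exp_Delta_def
      by (intro sum_mono mult_left_mono delta_bd eta_abs less_imp_le[OF joint_pos])
    also have "\<dots> = (\<Sum>j\<in>G i. \<bar>Th G i j\<bar>) / 2"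
      using joint_norm[of m G Th] assms(3) G by (simp add: sum_distrib_right[symmetric] del: times_divide_eq_right)
    finally have "ereal (exp_Delta m G Th i) \<le> ereal (\<Sum>j\<in>G i. \<bar>Th G i j\<bar>) / 2" by simp
    also have "\<dots> \<le> w1_max m Gs Ps / 2" using Wle[OF Th G] i by (intro ereal_divide_right_mono) simp_all
    finally show "ereal (exp_Delta m G Th i) \<le> w1_max m Gs Ps / 2" .
  qed
  show "(SUP Theta\<in>Ps. ereal (MI_SG m n Gs Theta)) \<le> ereal (real n * real m) * w1_max m Gs Ps / 2"
  proof (intro SUP_least)
    fix Th assume Th: "Th \<in> Ps"
    define T where "T = (\<lambda>(G,i). \<Sum>j\<in>G i. \<bar>Th G i j\<bar>) ` (Gs \<times> {..<m})"
    have fT: "finite T" using assms(1) by (simp add: T_def)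
    define c where "c = Max (insert 0 T)"
    have c0: "0 \<le> c" using fT by (simp add: c_def)
    have cW: "(\<Sum>j\<in>G i. \<bar>Th G i j\<bar>) \<le> c" if "G \<in> Gs" "i < m" for G i
      unfolding c_def using fT that by (intro Max_ge) (auto simp: T_def)
    have MI: "MI_SG m n Gs Th \<le> real n * real m * c / 2"
      unfolding MI_SG_def
    proof (rule MI_gen[where q = "1 / 2^(m*n)"])
      show "finite Gs" "Gs \<noteq> {}" by (fact assms(1), fact assms(2))
      show "finite (samples m n)" by (rule fin_samples)
      show "0 < sample_pmf m n g Th s" for g s by (rule sample_pos)
      show "(\<Sum>s\<in>samples m n. sample_pmf m n g Th s) = 1" if "g \<in> Gs" for g
        using assms(3) that by (simp add: sample_norm)
      show "0 < (1::real) / 2^(m*n)" by simp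
      show "real (card (samples m n)) * (1 / 2^(m*n)) = 1" by (simp add: card_samples)
      show "ln (sample_pmf m n g Th s / (1 / 2 ^ (m * n))) \<le> real n * real m * c / 2"
        if "g \<in> Gs" for g s using that cW by (intro sample_ln) auto
    qed
    show "ereal (MI_SG m n Gs Th) \<le> ereal (real n * real m) * w1_max m Gs Ps / 2"
    proof (cases "n = 0 \<or> m = 0")
      case True
      hence "MI_SG m n Gs Th \<le> 0" using MI by auto
      moreover have "ereal (real n * real m) = 0" using True by (auto simp: zero_ereal_def)
      hence "ereal (real n * real m) * w1_max m Gs Ps / 2 = 0"
        by (simp only: ereal_zero_mult ereal_divide_zero_left)
      ultimately show ?thesis by (simp add: zero_ereal_def)
    next
      case False
      obtain G0 where G0: "G0 \<in> Gs" using assms(2) by blast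
      have m0: "0 < m" using False by simp
      have "(0::ereal) \<le> ereal (\<Sum>j\<in>G0 0. \<bar>Th G0 0 j\<bar>)" by (simp add: sum_nonneg)
      hence w0: "0 \<le> w1_max m Gs Ps" using Wle[OF Th G0 m0] by (rule order_trans)
      have "ereal c \<le> w1_max m Gs Ps"
      proof -
        have "c \<in> insert 0 T" unfolding c_def using fT by (intro Max_in) auto
        thus ?thesis
        proof
          assume "c = 0" thus ?thesis using w0 by (simp add: zero_ereal_def)
        next
          assume "c \<in> T"
          then obtain G i where "G \<in> Gs" "i < m" "c = (\<Sum>j\<in>G i. \<bar>Th G i j\<bar>)"
            by (auto simp: T_def)
          thus ?thesis using Wle[OF Th] by simp
        qed
      qed
      hence "ereal (real n * real m) * ereal c \<le> ereal (real n * real m) * w1_max m Gs Ps"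
        by (rule ereal_mult_left_mono) simp
      hence "ereal (real n * real m) * ereal c / 2 \<le> ereal (real n * real m) * w1_max m Gs Ps / 2"
        by (rule ereal_divide_right_mono) simp
      moreover have "ereal (MI_SG m n Gs Th) \<le> ereal (real n * real m) * ereal c / 2"
        using MI by simp
      ultimately show ?thesis by (rule order_trans[rotated])
    qed
  qed
qed

end
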